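(* Let $n\ge1$ be an integer, $\alpha>0$, $M=\mathbb{R}^n\setminus\{0\}$ with measure $d\mu=e^{-1/|x|^\alpha}dx$, and $B_r=\{x\in M:|x|<r\}$. There exists a constant $C>0$ such that $\lambda_1(B_r)\le Cr^{-2(1+\alpha)}$ for all $0<r<1$, and $\lambda_1(B_r)\le Cr^{-2}$ for all $r\ge1$.
   Context: For an open set $U\subset M$, $\lambda_1(U)$ denotes the bottom of the spectrum of the operator $\mathcal{L}=\Delta-\nabla(|x|^{-\alpha})\cdot\nabla$ in $L^2(U,\mu)$ with Dirichlet boundary condition on $\partial U$; equivalently $\lambda_1(U)=\inf\frac{\int_U|\nabla\varphi|^2d\mu}{\int_U\varphi^2d\mu}$ over non-zero Lipschitz functions $\varphi$ with compact support in $U$. *)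

theory Defs
  imports "HOL-Analysis.Analysis"
begin

text \<open>Weighted measure d mu = exp(-1/|x|^alpha) dx on R^n minus the origin
  (the origin is given density 0; it is a Lebesgue null set anyway).\<close>
definition mu :: "real \<Rightarrow> ('a::euclidean_space) measure" where
  "mu \<alpha> = density lborel
     (\<lambda>x. if x = 0 then 0 else ennreal (exp (- (1 / (norm x powr \<alpha>)))))"

text \<open>Gradient of a real function (where it is differentiable; Lipschitz
  functions are differentiable almost everywhere).\<close>
definition grad :: "('a::euclidean_space \<Rightarrow> real) \<Rightarrow> 'a \<Rightarrow> 'a" where
  "grad \<phi> x = (if \<phi> differentiable (at x)
      then (\<Sum>b\<in>Basis. frechet_derivative \<phi> (at x) b *\<^sub>R b) else 0)"

definition test_fun :: "'a::euclidean_space set \<Rightarrow> ('a \<Rightarrow> real) \<Rightarrow> bool" where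
  "test_fun U \<phi> \<longleftrightarrow> (\<exists>L. L-lipschitz_on UNIV \<phi>)
     \<and> compact (closure {x. \<phi> x \<noteq> 0}) \<and> closure {x. \<phi> x \<noteq> 0} \<subseteq> U
     \<and> (\<exists>x. \<phi> x \<noteq> 0)"

definition rayleigh :: "real \<Rightarrow> ('a::euclidean_space \<Rightarrow> real) \<Rightarrow> real" where
  "rayleigh \<alpha> \<phi> = (\<integral>x. (norm (grad \<phi> x))\<^sup>2 \<partial>(mu \<alpha>)) / (\<integral>x. (\<phi> x)\<^sup>2 \<partial>(mu \<alpha>))"

definition lambda1 :: "real \<Rightarrow> 'a::euclidean_space set \<Rightarrow> real" where
  "lambda1 \<alpha> U = Inf (rayleigh \<alpha> ` {\<phi>. test_fun U \<phi>})"

definition Bpunct :: "real \<Rightarrow> 'a::real_normed_vector set" where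
  "Bpunct r = {x. x \<noteq> 0 \<and> norm x < r}"

end

theory Submission
  imports Defs
begin

lemma deriv_lip_bound:
  fixes f :: "'a::euclidean_space \<Rightarrow> real"
  assumes d: "(f has_derivative D) (at x)" and lip: "\<And>y z. \<bar>f y - f z\<bar> \<le> norm (y - z)"
  shows "\<bar>D v\<bar> \<le> norm v"
proof (cases "v = 0")
  case True
  then show ?thesis using has_derivative_linear[OF d] by (simp add: linear_0)
next
  case False
  have bl: "bounded_linear D" using d by (simp add: has_derivative_at_alt)
  have "\<bar>D v\<bar> \<le> (1 + e) * norm v" if e: "e > 0" for e
  proof -
    obtain d0 where d0: "d0 > 0" "\<And>y. norm (y - x) < d0 \<Longrightarrow> norm (f y - f x - D (y - x)) \<le> e * norm (y - x)"
      using d e unfolding has_derivative_at_alt by blast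
    define t where "t = d0 / (2 * norm v)"
    have t: "t > 0" using d0 False by (simp add: t_def)
    have "norm (t *\<^sub>R v) < d0" using d0 False by (simp add: t_def)
    then have 1: "\<bar>f (x + t *\<^sub>R v) - f x - D (t *\<^sub>R v)\<bar> \<le> e * (t * norm v)"
      using d0(2)[of "x + t *\<^sub>R v"] t by simp
    have 2: "\<bar>f (x + t *\<^sub>R v) - f x\<bar> \<le> t * norm v" using lip[of "x + t *\<^sub>R v" x] t by simp
    have "D (t *\<^sub>R v) = t * D v" using linear_scale[OF bounded_linear.linear[OF bl]] by simp
    then have 3: "\<bar>t * D v\<bar> \<le> t * norm v + e * (t * norm v)" using 1 2 by linarith
    have "t * \<bar>D v\<bar> \<le> t * ((1 + e) * norm v)" using 3 t by (simp add: abs_mult algebra_simps)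
    then show ?thesis using t by (simp only: mult_le_cancel_left_pos)
  qed
  note A = this
  show ?thesis
  proof (rule field_le_epsilon)
    fix e :: real assume e: "e > 0"
    have nv: "norm v > 0" using False by simp
    have "\<bar>D v\<bar> \<le> (1 + e / norm v) * norm v" using A[of "e / norm v"] e nv by simp
    also have "\<dots> = norm v + e" using nv by (simp add: distrib_right)
    finally show "\<bar>D v\<bar> \<le> norm v + e" .
  qed
qed

lemma grad_norm_le:
  fixes f :: "'a::euclidean_space \<Rightarrow> real"
  assumes lip: "\<And>y z. \<bar>f y - f z\<bar> \<le> norm (y - z)"
  shows "norm (grad f x) \<le> 1"
proof (cases "f differentiable (at x)")
  case False
  then show ?thesis by (simp add: grad_def)
next
  case True
  define D where "D = frechet_derivative f (at x)"
  have d: "(f has_derivative D) (at x)" using True frechet_derivative_works D_def by blast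
  have lin: "linear D" using has_derivative_linear[OF d] .
  define g where "g = (\<Sum>b\<in>Basis. D b *\<^sub>R b)"
  have gg: "grad f x = g" using True by (simp add: grad_def g_def D_def)
  have gb: "inner g b = D b" if "b \<in> Basis" for b using that by (simp add: g_def)
  have "D g = D (\<Sum>b\<in>Basis. inner g b *\<^sub>R b)" by (simp add: euclidean_representation)
  also have "\<dots> = (\<Sum>b\<in>Basis. inner g b * D b)"
    by (simp add: linear_sum[OF lin] linear_scale[OF lin])
  also have "\<dots> = (\<Sum>b\<in>Basis. inner g b * inner g b)" by (simp add: gb)
  also have "\<dots> = inner g g" by (simp add: euclidean_inner[of g g])
  finally have "(norm g)^2 = D g" by (simp add: power2_norm_eq_inner)
  also have "\<dots> \<le> norm g" using deriv_lip_bound[OF d lip, of g] by simp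
  finally have "(norm g)^2 \<le> norm g" .
  then have "norm g \<le> 1"
  proof (rule contrapos_pp)
    assume "\<not> norm g \<le> 1"
    then have "norm g * 1 < norm g * norm g" by (intro mult_strict_left_mono) auto
    then show "\<not> (norm g)^2 \<le> norm g" by (simp add: power2_eq_square)
  qed
  then show ?thesis using gg by simp
qed

lemma grad_zero_outside:
  fixes f :: "'a::euclidean_space \<Rightarrow> real"
  assumes "open S" "x \<in> S" "\<And>y. y \<in> S \<Longrightarrow> f y = 0"
  shows "grad f x = 0"
proof -
  have "((\<lambda>y. 0::real) has_derivative (\<lambda>h. 0)) (at x)" by simp
  then have d: "(f has_derivative (\<lambda>h. 0)) (at x)"
    by (rule has_derivative_transform_within_open[OF _ assms(1,2)]) (use assms(3) in auto)
  then have "frechet_derivative f (at x) = (\<lambda>h. 0)" using frechet_derivative_at by metis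
  moreover have "f differentiable (at x)" using d differentiable_def by blast
  ultimately show ?thesis by (simp add: grad_def)
qed

lemma dens_meas: "(\<lambda>x::'a::euclidean_space. if x = 0 then 0 else ennreal (exp (- (1 / (norm x powr \<alpha>))))) \<in> borel_measurable borel"
  by measurable

lemma sets_mu[simp]: "sets (mu \<alpha> :: 'a::euclidean_space measure) = sets borel"
  by (simp add: mu_def)

lemma space_mu[simp]: "space (mu \<alpha> :: 'a::euclidean_space measure) = UNIV"
  by (simp add: mu_def)

lemma mu_upper:
  fixes A :: "'a::euclidean_space set"
  assumes A: "A \<in> sets borel" and R: "R > 0" "\<alpha> > 0" and bd: "\<And>x. x \<in> A \<Longrightarrow> norm x \<le> R"
  shows "emeasure (mu \<alpha>) A \<le> ennreal (exp (- (1 / R powr \<alpha>))) * emeasure lborel A"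
proof -
  have "emeasure (mu \<alpha>) A = (\<integral>\<^sup>+ x. (if x = 0 then 0 else ennreal (exp (- (1 / (norm x powr \<alpha>))))) * indicator A x \<partial>lborel)"
    unfolding mu_def using A dens_meas by (subst emeasure_density) auto
  also have "\<dots> \<le> (\<integral>\<^sup>+ x. ennreal (exp (- (1 / R powr \<alpha>))) * indicator A x \<partial>lborel)"
  proof (rule nn_integral_mono)
    fix x :: 'a
    show "(if x = 0 then 0 else ennreal (exp (- (1 / (norm x powr \<alpha>))))) * indicator A x \<le> ennreal (exp (- (1 / R powr \<alpha>))) * indicator A x"
    proof (cases "x \<in> A \<and> x \<noteq> 0")
      case True
      then have "norm x powr \<alpha> \<le> R powr \<alpha>" using bd R by (intro powr_mono2) auto
      moreover have "norm x powr \<alpha> > 0" using True by simp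
      ultimately have "1 / R powr \<alpha> \<le> 1 / norm x powr \<alpha>" using R by (auto intro!: divide_left_mono mult_pos_pos)
      then show ?thesis using True by (simp add: ennreal_leI)
    qed (auto simp: indicator_def)
  qed
  also have "\<dots> = ennreal (exp (- (1 / R powr \<alpha>))) * emeasure lborel A"
    using A by (simp add: nn_integral_cmult_indicator)
  finally show ?thesis .
qed

lemma mu_lower:
  fixes A :: "'a::euclidean_space set"
  assumes A: "A \<in> sets borel" and a: "a > 0" "\<alpha> > 0" and bd: "\<And>x. x \<in> A \<Longrightarrow> a \<le> norm x"
  shows "ennreal (exp (- (1 / a powr \<alpha>))) * emeasure lborel A \<le> emeasure (mu \<alpha>) A"
proof -
  have "ennreal (exp (- (1 / a powr \<alpha>))) * emeasure lborel A = (\<integral>\<^sup>+ x. ennreal (exp (- (1 / a powr \<alpha>))) * indicator A x \<partial>lborel)"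
    using A by (simp add: nn_integral_cmult_indicator)
  also have "\<dots> \<le> (\<integral>\<^sup>+ x. (if x = 0 then 0 else ennreal (exp (- (1 / (norm x powr \<alpha>))))) * indicator A x \<partial>lborel)"
  proof (rule nn_integral_mono)
    fix x :: 'a
    show "ennreal (exp (- (1 / a powr \<alpha>))) * indicator A x \<le> (if x = 0 then 0 else ennreal (exp (- (1 / (norm x powr \<alpha>))))) * indicator A x"
    proof (cases "x \<in> A")
      case True
      then have x0: "x \<noteq> 0" using bd a by force
      have "a powr \<alpha> \<le> norm x powr \<alpha>" using bd True a by (intro powr_mono2) auto
      moreover have "a powr \<alpha> > 0" using a by simp
      ultimately have "1 / norm x powr \<alpha> \<le> 1 / a powr \<alpha>" using x0 by (auto intro!: divide_left_mono mult_pos_pos)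
      then show ?thesis using True x0 by (simp add: ennreal_leI)
    qed (auto simp: indicator_def)
  qed
  also have "\<dots> = emeasure (mu \<alpha>) A"
    unfolding mu_def using A dens_meas by (subst emeasure_density) auto
  finally show ?thesis .
qed

lemma mu_upper_real:
  fixes A :: "'a::euclidean_space set"
  assumes A: "A \<in> sets borel" and R: "R > 0" "\<alpha> > 0" and bd: "\<And>x. x \<in> A \<Longrightarrow> norm x \<le> R"
    and fin: "emeasure lborel A < \<infinity>"
  shows "emeasure (mu \<alpha>) A < \<infinity>" "measure (mu \<alpha>) A \<le> exp (- (1 / R powr \<alpha>)) * measure lborel A"
proof -
  have e1: "emeasure lborel A = ennreal (measure lborel A)" using fin by (simp add: emeasure_eq_ennreal_measure)
  have le: "emeasure (mu \<alpha>) A \<le> ennreal (exp (- (1 / R powr \<alpha>)) * measure lborel A)"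
    using mu_upper[OF A R bd] e1 by (simp add: ennreal_mult)
  then show fin2: "emeasure (mu \<alpha>) A < \<infinity>" using le_less_trans by fastforce
  have "ennreal (measure (mu \<alpha>) A) \<le> ennreal (exp (- (1 / R powr \<alpha>)) * measure lborel A)"
    using le fin2 by (simp add: emeasure_eq_ennreal_measure)
  then show "measure (mu \<alpha>) A \<le> exp (- (1 / R powr \<alpha>)) * measure lborel A"
    by (simp add: ennreal_le_iff)
qed

lemma mu_lower_real:
  fixes A :: "'a::euclidean_space set"
  assumes A: "A \<in> sets borel" and a: "a > 0" "\<alpha> > 0" and bd: "\<And>x. x \<in> A \<Longrightarrow> a \<le> norm x"
    and fin: "emeasure lborel A < \<infinity>" and fin2: "emeasure (mu \<alpha>) A < \<infinity>"
  shows "exp (- (1 / a powr \<alpha>)) * measure lborel A \<le> measure (mu \<alpha>) A"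
proof -
  have e1: "emeasure lborel A = ennreal (measure lborel A)" using fin by (simp add: emeasure_eq_ennreal_measure)
  have "ennreal (exp (- (1 / a powr \<alpha>)) * measure lborel A) \<le> ennreal (measure (mu \<alpha>) A)"
    using mu_lower[OF A a bd] e1 fin2 by (simp add: ennreal_mult emeasure_eq_ennreal_measure)
  then show ?thesis by (simp add: ennreal_le_iff)
qed

lemma content_cball_scale:
  fixes c :: "'a::euclidean_space"
  assumes "r \<ge> 0"
  shows "measure lborel (cball c r) = r ^ DIM('a) * measure lborel (ball (0::'a) 1)"
  using content_cball_conv_ball[of c r] content_ball_conv_unit_ball[OF assms, of c] by simp

lemma phi_lip:
  fixes c :: "'a::euclidean_space"
  shows "\<bar>max 0 (w - dist y c) - max 0 (w - dist z c)\<bar> \<le> norm (y - z)"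
proof -
  have "dist y c \<le> dist y z + dist z c" by (rule dist_triangle)
  moreover have "dist z c \<le> dist z y + dist y c" by (rule dist_triangle)
  ultimately show ?thesis by (simp add: dist_norm norm_minus_commute max_def abs_le_iff)
qed

lemma bump_rayleigh:
  fixes c :: "'a::euclidean_space"
  assumes al: "\<alpha> > 0" and a: "a > 0" and w: "w > 0" and nc: "norm c = a + w"
  shows "rayleigh \<alpha> (\<lambda>x. max 0 (w - dist x c))
     \<le> 4 * 2 ^ DIM('a) / w\<^sup>2 * exp (1 / a powr \<alpha> - 1 / (a + 2 * w) powr \<alpha>)"
proof -
  define \<phi> :: "'a \<Rightarrow> real" where "\<phi> = (\<lambda>x. max 0 (w - dist x c))"
  define K where "K = measure lborel (ball (0::'a) 1)"
  have K: "K > 0" unfolding K_def using content_ball_pos[of 1 "0::'a"] by simp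
  define E1 where "E1 = exp (- (1 / (a + 2 * w) powr \<alpha>))"
  define E0 where "E0 = exp (- (1 / a powr \<alpha>))"
  define n where "n = DIM('a)"
  have lip: "\<bar>\<phi> y - \<phi> z\<bar> \<le> norm (y - z)" for y z unfolding \<phi>_def by (rule phi_lip)
  have S1: "cball c w \<in> sets borel" by simp
  have bd1: "norm x \<le> a + 2 * w" if "x \<in> cball c w" for x
    using that nc norm_triangle_ineq2[of x c] by (auto simp: dist_norm norm_minus_commute) 
  have fin1: "emeasure lborel (cball c w) < \<infinity>" by (rule emeasure_lborel_cball_finite)
  note U = mu_upper_real[OF S1 _ al bd1 fin1]
  have m1: "measure (mu \<alpha>) (cball c w) \<le> E1 * (w ^ n * K)"
    using U(2) a w content_cball_scale[of w c] by (simp add: E1_def K_def n_def)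
  have pt1: "(norm (grad \<phi> x))\<^sup>2 \<le> indicator (cball c w) x" for x
  proof (cases "x \<in> cball c w")
    case True
    have "norm (grad \<phi> x) \<le> 1" using grad_norm_le[OF lip] .
    then have "(norm (grad \<phi> x))\<^sup>2 \<le> 1" by (simp add: power_le_one)
    then show ?thesis using True by simp
  next
    case False
    have "grad \<phi> x = 0"
      by (rule grad_zero_outside[of "- cball c w"]) (use False in \<open>auto simp: \<phi>_def dist_commute\<close>)
    then show ?thesis by simp
  qed
  have intI1: "integrable (mu \<alpha>) (indicator (cball c w) :: 'a \<Rightarrow> real)"
    using U(1) a w by (intro integrable_real_indicator) auto
  have N: "(\<integral>x. (norm (grad \<phi> x))\<^sup>2 \<partial>(mu \<alpha>)) \<le> measure (mu \<alpha>) (cball c w)"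
  proof (cases "integrable (mu \<alpha>) (\<lambda>x. (norm (grad \<phi> x))\<^sup>2)")
    case True
    have "(\<integral>x. (norm (grad \<phi> x))\<^sup>2 \<partial>(mu \<alpha>)) \<le> (\<integral>x. indicator (cball c w) x \<partial>(mu \<alpha>))"
      by (rule integral_mono[OF True intI1 pt1])
    then show ?thesis by simp
  next
    case False
    then show ?thesis by (simp add: not_integrable_integral_eq)
  qed
  have N0: "0 \<le> (\<integral>x. (norm (grad \<phi> x))\<^sup>2 \<partial>(mu \<alpha>))" by (rule integral_nonneg_AE) simp
  have S2: "cball c (w/2) \<in> sets borel" by simp
  have bd2: "a \<le> norm x" if "x \<in> cball c (w/2)" for x
    using that nc norm_triangle_ineq2[of c x] w by (auto simp: dist_norm norm_minus_commute)
  have bd2': "norm x \<le> a + 2 * w" if "x \<in> cball c (w/2)" for x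
    using that nc norm_triangle_ineq2[of x c] w by (auto simp: dist_norm norm_minus_commute)
  have fin2: "emeasure lborel (cball c (w/2)) < \<infinity>" by (rule emeasure_lborel_cball_finite)
  have fin2': "emeasure (mu \<alpha>) (cball c (w/2)) < \<infinity>"
    using mu_upper_real(1)[OF S2 _ al bd2' fin2] a w by simp
  have m2: "E0 * ((w/2) ^ n * K) \<le> measure (mu \<alpha>) (cball c (w/2))"
    using mu_lower_real[OF S2 a al bd2 fin2 fin2'] w content_cball_scale[of "w/2" c]
    by (simp add: E0_def K_def n_def)
  have meas_phi: "\<phi> \<in> borel_measurable borel" unfolding \<phi>_def by measurable
  have intphi: "integrable (mu \<alpha>) (\<lambda>x. (\<phi> x)\<^sup>2)"
  proof (rule Bochner_Integration.integrable_bound[where f = "\<lambda>x. w\<^sup>2 * indicator (cball c w) x"])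
    show "integrable (mu \<alpha>) (\<lambda>x. w\<^sup>2 * indicator (cball c w) x)"
      using intI1 by simp
    show "(\<lambda>x. (\<phi> x)\<^sup>2) \<in> borel_measurable (mu \<alpha>)"
      unfolding measurable_cong_sets[OF sets_mu refl] using meas_phi by measurable
    show "AE x in mu \<alpha>. norm ((\<phi> x)\<^sup>2) \<le> norm (w\<^sup>2 * indicator (cball c w) x)"
    proof (rule AE_I2)
      fix x
      show "norm ((\<phi> x)\<^sup>2) \<le> norm (w\<^sup>2 * indicator (cball c w) x)"
      proof (cases "x \<in> cball c w")
        case True
        have "0 \<le> \<phi> x" "\<phi> x \<le> w" using w by (auto simp: \<phi>_def)
        then have "(\<phi> x)\<^sup>2 \<le> w\<^sup>2" by (intro power_mono) auto
        then show ?thesis using True by simp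
      next
        case False
        then show ?thesis by (simp add: \<phi>_def dist_commute)
      qed
    qed
  qed
  have intI2: "integrable (mu \<alpha>) (\<lambda>x. (w/2)\<^sup>2 * indicator (cball c (w/2)) x)"
    using fin2' by (intro integrable_mult_right integrable_real_indicator) auto
  have pt2: "(w/2)\<^sup>2 * indicator (cball c (w/2)) x \<le> (\<phi> x)\<^sup>2" for x
  proof (cases "x \<in> cball c (w/2)")
    case True
    then have "w/2 \<le> \<phi> x" by (auto simp: \<phi>_def dist_commute max_def)
    then have "(w/2)\<^sup>2 \<le> (\<phi> x)\<^sup>2" using w by (intro power_mono) auto
    then show ?thesis using True by simp
  qed simp
  have Dn: "(w/2)\<^sup>2 * measure (mu \<alpha>) (cball c (w/2)) \<le> (\<integral>x. (\<phi> x)\<^sup>2 \<partial>(mu \<alpha>))"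
  proof -
    have "(\<integral>x. (w/2)\<^sup>2 * indicator (cball c (w/2)) x \<partial>(mu \<alpha>)) \<le> (\<integral>x. (\<phi> x)\<^sup>2 \<partial>(mu \<alpha>))"
      by (rule integral_mono[OF intI2 intphi pt2])
    then show ?thesis by simp
  qed
  have E0: "E0 > 0" by (simp add: E0_def)
  have pos: "0 < (w/2)\<^sup>2 * (E0 * ((w/2) ^ n * K))" using E0 K w by simp
  have low: "(w/2)\<^sup>2 * (E0 * ((w/2) ^ n * K)) \<le> (\<integral>x. (\<phi> x)\<^sup>2 \<partial>(mu \<alpha>))"
    using Dn m2 w by (meson mult_left_mono order.trans zero_le_power2)
  have "rayleigh \<alpha> \<phi> \<le> (E1 * (w ^ n * K)) / ((w/2)\<^sup>2 * (E0 * ((w/2) ^ n * K)))"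
    unfolding rayleigh_def
    by (rule frac_le) (use N N0 m1 pos low w K in \<open>auto simp: E1_def\<close>)
  also have "\<dots> = 4 * 2 ^ n / w\<^sup>2 * (E1 / E0)"
    using w K E0 by (simp add: power_divide field_simps)
  also have "E1 / E0 = exp (1 / a powr \<alpha> - 1 / (a + 2 * w) powr \<alpha>)"
    by (simp add: E1_def E0_def exp_diff[symmetric])
  finally show ?thesis by (simp add: \<phi>_def n_def)
qed

lemma expo_bound:
  fixes a b \<alpha> :: real
  assumes a: "0 < a" and ab: "a \<le> b" and al: "\<alpha> > 0"
  shows "1 / a powr \<alpha> - 1 / b powr \<alpha> \<le> \<alpha> * (b - a) / a powr (1 + \<alpha>)"
proof -
  define x where "x = b / a"
  have x1: "x \<ge> 1" using a ab by (simp add: x_def)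
  have bx: "b = a * x" using a by (simp add: x_def)
  have "x powr (- \<alpha>) = exp (- \<alpha> * ln x)" using x1 by (simp add: powr_def)
  also have "\<dots> \<ge> 1 + (- \<alpha> * ln x)" by (rule exp_ge_add_one_self)
  finally have h1: "1 - \<alpha> * ln x \<le> x powr (- \<alpha>)" by simp
  have "\<alpha> * ln x \<le> \<alpha> * (x - 1)" using x1 al ln_le_minus_one[of x] by (intro mult_left_mono) auto
  with h1 have h2: "1 - x powr (- \<alpha>) \<le> \<alpha> * (x - 1)" by linarith
  have pa: "a powr \<alpha> > 0" using a by simp
  have "1 / b powr \<alpha> = (1 / a powr \<alpha>) * x powr (- \<alpha>)"
    using a x1 by (simp add: bx powr_mult powr_minus divide_inverse)
  then have "1 / a powr \<alpha> - 1 / b powr \<alpha> = (1 / a powr \<alpha>) * (1 - x powr (- \<alpha>))"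
    by (simp add: algebra_simps)
  also have "\<dots> \<le> (1 / a powr \<alpha>) * (\<alpha> * (x - 1))" using h2 pa by (intro mult_left_mono) auto
  also have "\<dots> = \<alpha> * (b - a) / (a * a powr \<alpha>)" using a by (simp add: x_def field_simps)
  also have "a * a powr \<alpha> = a powr (1 + \<alpha>)" using a by (simp add: powr_mult_base)
  finally show ?thesis .
qed

lemma rayleigh_nonneg: "rayleigh \<alpha> \<psi> \<ge> 0"
  unfolding rayleigh_def by (intro divide_nonneg_nonneg integral_nonneg_AE) auto

lemma exists_test:
  fixes r \<alpha> :: real
  assumes al: "\<alpha> > 0" and r: "r > 0"
  shows "\<exists>\<phi> :: 'a::euclidean_space \<Rightarrow> real. test_fun (Bpunct r) \<phi> \<and>
    rayleigh \<alpha> \<phi> \<le> 4 * 2 ^ DIM('a) * exp 1 *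
      (64 * r powr (-2) + 4 * \<alpha>\<^sup>2 * 2 powr (2 + 2 * \<alpha>) * r powr (- 2 * (1 + \<alpha>)))"
proof -
  define a where "a = r / 2"
  define q where "q = a powr (1 + \<alpha>) / (2 * \<alpha>)"
  define w where "w = min (r / 8) q"
  have a: "a > 0" using r by (simp add: a_def)
  have q: "q > 0" using a al by (simp add: q_def)
  have w: "w > 0" using q r by (simp add: w_def)
  have wr: "w \<le> r / 8" by (simp add: w_def)
  define e :: 'a where "e = (SOME b. b \<in> Basis)"
  define c where "c = (a + w) *\<^sub>R e"
  have nc: "norm c = a + w" using a w by (simp add: c_def e_def)
  define \<phi> :: "'a \<Rightarrow> real" where "\<phi> = (\<lambda>x. max 0 (w - dist x c))"
  have supp: "{x. \<phi> x \<noteq> 0} = ball c w" by (auto simp: \<phi>_def max_def dist_commute)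
  have cl: "closure {x. \<phi> x \<noteq> 0} = cball c w" using w by (simp add: supp closure_ball)
  have sub: "cball c w \<subseteq> Bpunct r"
  proof
    fix x assume x: "x \<in> cball c w"
    have "norm c - norm (c - x) \<le> norm x" using norm_triangle_ineq2[of c x] by simp
    then have "a \<le> norm x" using x nc by (simp add: dist_norm)
    moreover have "norm x \<le> norm c + norm (x - c)" using norm_triangle_ineq2[of x c] by simp
    then have "norm x \<le> a + 2 * w" using x nc by (simp add: dist_norm norm_minus_commute)
    ultimately show "x \<in> Bpunct r" using a wr by (auto simp: Bpunct_def a_def)
  qed
  have lp: "dist (\<phi> y) (\<phi> z) \<le> 1 * dist y z" for y z
    using phi_lip[of w y c z] unfolding \<phi>_def dist_real_def by (simp add: dist_norm)
  have lip: "1-lipschitz_on UNIV \<phi>"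
    unfolding lipschitz_on_def using lp by simp
  have tf: "test_fun (Bpunct r) \<phi>"
    unfolding test_fun_def cl using lip sub w
    by (auto intro!: exI[of _ c] simp: \<phi>_def)
  have R: "rayleigh \<alpha> \<phi> \<le> 4 * 2 ^ DIM('a) / w\<^sup>2 * exp (1 / a powr \<alpha> - 1 / (a + 2 * w) powr \<alpha>)"
    unfolding \<phi>_def by (rule bump_rayleigh[OF al a w nc])
  have "1 / a powr \<alpha> - 1 / (a + 2 * w) powr \<alpha> \<le> \<alpha> * (a + 2 * w - a) / a powr (1 + \<alpha>)"
    using a w al by (intro expo_bound) auto
  also have "\<dots> \<le> 1"
  proof -
    have wq: "w \<le> q" by (simp add: w_def)
    have q2: "2 * q = a powr (1 + \<alpha>) / \<alpha>" using al by (simp add: q_def)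
    have h: "2 * w \<le> a powr (1 + \<alpha>) / \<alpha>" using wq q2 by linarith
    have "\<alpha> * (2 * w) \<le> \<alpha> * (a powr (1 + \<alpha>) / \<alpha>)" using mult_left_mono[OF h, of \<alpha>] al by simp
    then have "\<alpha> * (2 * w) \<le> a powr (1 + \<alpha>)" using al by simp
    then show ?thesis using a by simp
  qed
  finally have ex: "exp (1 / a powr \<alpha> - 1 / (a + 2 * w) powr \<alpha>) \<le> exp 1" by simp
  define B where "B = 4 * \<alpha>\<^sup>2 * 2 powr (2 + 2 * \<alpha>)"
  have B0: "B * r powr (- 2 * (1 + \<alpha>)) \<ge> 0" by (simp add: B_def)
  have r2: "r powr (-2) = inverse (r^2)" using r by (simp add: powr_minus)
  have iw: "1 / w\<^sup>2 \<le> 64 * r powr (-2) + B * r powr (- 2 * (1 + \<alpha>))"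
  proof (cases "r / 8 \<le> q")
    case True
    then have "w = r / 8" by (simp add: w_def)
    moreover have "1 / (r / 8)\<^sup>2 = 64 * r powr (-2)" using r by (simp add: r2 power2_eq_square divide_simps)
    ultimately have "1 / w\<^sup>2 = 64 * r powr (-2)" by (simp only:)
    then show ?thesis using B0 by simp
  next
    case False
    then have ww: "w = q" by (simp add: w_def)
    have "q\<^sup>2 = a powr (2 + 2 * \<alpha>) / (4 * \<alpha>\<^sup>2)"
    proof -
      have pp: "a powr (1 + \<alpha>) * a powr (1 + \<alpha>) = a powr (2 + 2 * \<alpha>)"
        by (subst powr_add[symmetric]) (simp add: algebra_simps)
      show ?thesis using al by (simp add: q_def power2_eq_square pp[symmetric])
    qed
    also have "a powr (2 + 2 * \<alpha>) = r powr (2 + 2 * \<alpha>) / 2 powr (2 + 2 * \<alpha>)"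
      using r by (simp add: a_def powr_divide)
    finally have "1 / w\<^sup>2 = B * inverse (r powr (2 + 2 * \<alpha>))"
      using ww r al q by (simp add: B_def field_simps)
    also have "inverse (r powr (2 + 2 * \<alpha>)) = r powr (- 2 * (1 + \<alpha>))"
      using r by (simp add: powr_minus[symmetric] algebra_simps)
    finally show ?thesis using r by simp
  qed
  have "4 * 2 ^ DIM('a) / w\<^sup>2 * exp (1 / a powr \<alpha> - 1 / (a + 2 * w) powr \<alpha>) \<le> 4 * 2 ^ DIM('a) / w\<^sup>2 * exp 1"
    using ex w by (intro mult_left_mono) auto
  with R have "rayleigh \<alpha> \<phi> \<le> 4 * 2 ^ DIM('a) * (1 / w\<^sup>2) * exp 1" by simp
  also have "\<dots> \<le> 4 * 2 ^ DIM('a) * (64 * r powr (-2) + B * r powr (- 2 * (1 + \<alpha>))) * exp 1"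
    using iw by (intro mult_right_mono mult_left_mono) auto
  finally show ?thesis using tf by (auto simp: B_def algebra_simps)
qed

lemma lambda1_bound:
  fixes r \<alpha> :: real
  assumes al: "\<alpha> > 0" and r: "r > 0"
  shows "lambda1 \<alpha> (Bpunct r :: 'a::euclidean_space set) \<le> 4 * 2 ^ DIM('a) * exp 1 *
      (64 * r powr (-2) + 4 * \<alpha>\<^sup>2 * 2 powr (2 + 2 * \<alpha>) * r powr (- 2 * (1 + \<alpha>)))"
proof -
  obtain \<phi> :: "'a \<Rightarrow> real" where tf: "test_fun (Bpunct r) \<phi>" and
    R: "rayleigh \<alpha> \<phi> \<le> 4 * 2 ^ DIM('a) * exp 1 *
      (64 * r powr (-2) + 4 * \<alpha>\<^sup>2 * 2 powr (2 + 2 * \<alpha>) * r powr (- 2 * (1 + \<alpha>)))"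
    using exists_test[OF al r] by blast
  have "lambda1 \<alpha> (Bpunct r :: 'a set) \<le> rayleigh \<alpha> \<phi>"
    unfolding lambda1_def
    by (rule cInf_lower) (use tf rayleigh_nonneg in \<open>auto intro!: bdd_belowI[where m=0]\<close>)
  with R show ?thesis by linarith
qed

theorem lemma7p2:
  fixes \<alpha> :: real
  assumes "\<alpha> > 0"
  shows "\<exists>C>0.
    (\<forall>r. 0 < r \<and> r < 1 \<longrightarrow>
        lambda1 \<alpha> (Bpunct r :: (real ^ 'n) set) \<le> C * r powr (- 2 * (1 + \<alpha>)))
  \<and> (\<forall>r\<ge>1. lambda1 \<alpha> (Bpunct r :: (real ^ 'n) set) \<le> C * r powr (- 2))"
proof -
  define B where "B = 4 * \<alpha>\<^sup>2 * 2 powr (2 + 2 * \<alpha>)"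
  define K0 :: real where "K0 = 4 * 2 ^ DIM(real ^ 'n) * exp 1"
  have B: "B \<ge> 0" by (simp add: B_def)
  have K0: "K0 > 0" by (simp add: K0_def)
  have lb: "lambda1 \<alpha> (Bpunct r :: (real ^ 'n) set) \<le> K0 * (64 * r powr (-2) + B * r powr (- 2 * (1 + \<alpha>)))"
    if "r > 0" for r
    using lambda1_bound[OF assms that, where 'a = "real ^ 'n"] by (simp add: K0_def B_def)
  show ?thesis
  proof (intro exI[of _ "K0 * (64 + B)"] conjI allI impI)
    show "K0 * (64 + B) > 0" using K0 B by simp
  next
    fix r :: real assume r: "0 < r \<and> r < 1"
    have "r powr (-2) \<le> r powr (- 2 * (1 + \<alpha>))" using r assms by (intro powr_mono') auto
    then have "K0 * (64 * r powr (-2) + B * r powr (- 2 * (1 + \<alpha>))) \<le> K0 * (64 + B) * r powr (- 2 * (1 + \<alpha>))"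
      using K0 B by (simp add: algebra_simps)
    then show "lambda1 \<alpha> (Bpunct r :: (real ^ 'n) set) \<le> K0 * (64 + B) * r powr (- 2 * (1 + \<alpha>))"
      using lb[of r] r by linarith
  next
    fix r :: real assume r: "1 \<le> r"
    have "r powr (- 2 * (1 + \<alpha>)) \<le> r powr (-2)" using r assms by (intro powr_mono) auto
    then have "K0 * (64 * r powr (-2) + B * r powr (- 2 * (1 + \<alpha>))) \<le> K0 * (64 + B) * r powr (-2)"
      using K0 B by (simp add: algebra_simps mult_left_mono)
    then show "lambda1 \<alpha> (Bpunct r :: (real ^ 'n) set) \<le> K0 * (64 + B) * r powr (-2)"
      using lb[of r] r by linarith
  qed
qed

end
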